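(* Let $q \ge 2$ be a fixed integer. For a positive integer $N$, let $p$ be the unique integer such that \[ \frac{\ln q}{q-1}\, q^{p} \le N < \frac{\ln q}{q-1}\, q^{p+1}, \] and let $n = N + p$. There exist constants $N_0$ and $d > 0$ (depending on $q$ but not on $N$ or $P$) such that for every $N > N_0$ and every word $P$ of length $p$ over a $q$-letter alphabet, \[ G_P(N) \ge \frac{d\, q^n}{n^2}. \]
   Context: Fix an alphabet of size $q$. For a word $P = a_1 a_2 \cdots a_p$ of length $p$ and a positive integer $N$, $G_P(N)$ denotes the number of $q$-ary words $a_1 a_2 \cdots a_{N+p}$ (of length $N+p$) such that the factor $a_k a_{k+1} \cdots a_{k+p-1}$ equals $P$ for $k = 1$ and for $k = N+1$, and for no other $k$ with $1 \le k \le N+1$. Equivalently, $G_P(N)$ is the number of words of length $N+p$ that begin and end with $P$ and contain exactly two occurrences of $P$ as a factor. *)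

theory Defs
  imports Complex_Main
begin

text \<open>Words over the alphabet {0,...,q-1} are lists of naturals. The factor of w of
  length |P| starting at 0-indexed position k is take (length P) (drop k w).\<close>

definition q_words :: "nat \<Rightarrow> nat \<Rightarrow> nat list set" where
  "q_words q m = {w. length w = m \<and> set w \<subseteq> {..<q}}"

definition G :: "nat \<Rightarrow> nat list \<Rightarrow> nat \<Rightarrow> nat" where
  "G q P N = card {w \<in> q_words q (N + length P).
      \<forall>k \<le> N. (take (length P) (drop k w) = P \<longleftrightarrow> (k = 0 \<or> k = N))}"

end

theory Submission
  imports Defs
begin


lemma qw_finite: "finite (q_words q m)"
  unfolding q_words_def using finite_lists_length_eq[of "{..<q}" m] by (simp add: conj_commute)

lemma qw_card: "card (q_words q m) = q ^ m"
  unfolding q_words_def using card_lists_length_eq[of "{..<q}" m] by (simp add: conj_commute)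

lemma card_fix2:
  assumes "a + b \<le> m"
  shows "card {w \<in> q_words q m. take a w = u \<and> drop (m-b) w = v} \<le> q^(m-a-b)"
proof -
  let ?S = "{w \<in> q_words q m. take a w = u \<and> drop (m-b) w = v}"
  let ?f = "\<lambda>w. take (m-a-b) (drop a w)"
  have inj: "inj_on ?f ?S"
  proof (rule inj_onI)
    fix x y assume x: "x \<in> ?S" and y: "y \<in> ?S" and e: "?f x = ?f y"
    have lx: "length x = m" and ly: "length y = m" using x y by (auto simp: q_words_def)
    have ex: "x = take a x @ take (m-a-b) (drop a x) @ drop (m-b) x"
    proof -
      have "drop (m-a-b) (drop a x) = drop (m-b) x" using assms by (simp add: drop_drop)
      hence "take (m-a-b) (drop a x) @ drop (m-b) x = drop a x"
        by (metis append_take_drop_id)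
      thus ?thesis by simp
    qed
    have ey: "y = take a y @ take (m-a-b) (drop a y) @ drop (m-b) y"
    proof -
      have "drop (m-a-b) (drop a y) = drop (m-b) y" using assms by (simp add: drop_drop)
      hence "take (m-a-b) (drop a y) @ drop (m-b) y = drop a y"
        by (metis append_take_drop_id)
      thus ?thesis by simp
    qed
    have "take a x = take a y" "drop (m-b) x = drop (m-b) y" using x y by auto
    hence mid: "take a x @ take (m-a-b) (drop a x) @ drop (m-b) x = take a y @ take (m-a-b) (drop a y) @ drop (m-b) y"
      using e by simp
    show "x = y" by (rule trans[OF ex trans[OF mid ey[symmetric]]])
  qed
  have sub: "?f ` ?S \<subseteq> q_words q (m-a-b)"
    using assms by (auto simp: q_words_def dest: in_set_takeD in_set_dropD)
  have "card ?S = card (?f ` ?S)" using card_image[OF inj] by simp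
  also have "\<dots> \<le> card (q_words q (m-a-b))" by (rule card_mono[OF qw_finite sub])
  finally show ?thesis by (simp add: qw_card)
qed

lemma card_fix1:
  assumes "a \<le> m"
  shows "card {w \<in> q_words q m. take a w = u} \<le> q^(m-a)"
proof -
  have "{w \<in> q_words q m. take a w = u} = {w \<in> q_words q m. take a w = u \<and> drop (m-0) w = []}"
    by (auto simp: q_words_def)
  thus ?thesis using card_fix2[of a 0 m q u "[]"] assms by simp
qed

lemma occ_iff:
  assumes "P \<noteq> []"
  shows "take (length P) (drop k w) = P \<longleftrightarrow> (k + length P \<le> length w \<and> (\<forall>i<length P. w!(k+i) = P!i))"
proof
  assume h: "take (length P) (drop k w) = P"
  hence l: "k + length P \<le> length w"
  proof -
    have "length (take (length P) (drop k w)) = length P" using h by simp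
    thus ?thesis using assms by (cases "length w \<le> k") (auto simp: min_def split: if_splits)
  qed
  moreover have "\<forall>i<length P. w!(k+i) = P!i"
  proof (intro allI impI)
    fix i assume "i < length P"
    hence "take (length P) (drop k w) ! i = w!(k+i)" using l by (simp add: nth_drop)
    thus "w!(k+i) = P!i" using h by simp
  qed
  ultimately show "k + length P \<le> length w \<and> (\<forall>i<length P. w!(k+i) = P!i)" by blast
next
  assume h: "k + length P \<le> length w \<and> (\<forall>i<length P. w!(k+i) = P!i)"
  show "take (length P) (drop k w) = P"
    by (rule nth_equalityI) (use h in auto)
qed


definition H :: "nat \<Rightarrow> nat list \<Rightarrow> nat \<Rightarrow> nat list set" where
  "H q P L = {w \<in> q_words q L. take (length P) w = P \<and> (\<forall>k>0. take (length P) (drop k w) \<noteq> P)}"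

lemma H_finite: "finite (H q P L)"
  unfolding H_def by (rule finite_subset[OF _ qw_finite[of q L]]) auto

lemma H_card_le: assumes "length P \<le> L" shows "card (H q P L) \<le> q^(L - length P)"
proof -
  have "H q P L \<subseteq> {w \<in> q_words q L. take (length P) w = P}" unfolding H_def by auto
  hence "card (H q P L) \<le> card {w \<in> q_words q L. take (length P) w = P}"
    by (rule card_mono[rotated]) (rule finite_subset[OF _ qw_finite[of q L]], auto)
  also have "\<dots> \<le> q^(L - length P)" by (rule card_fix1[OF assms])
  finally show ?thesis .
qed

lemma H_empty: assumes "L < length P" shows "H q P L = {}"
proof -
  { fix w assume "w \<in> H q P L"
    hence "length w = L" "take (length P) w = P" by (auto simp: H_def q_words_def)
    hence False using assms by (metis length_take min.absorb_iff2 not_le order_less_imp_le) }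
  thus ?thesis by blast
qed

lemma take_drop_take: "k + p \<le> m \<Longrightarrow> take p (drop k (take m w)) = take p (drop k w)"
  by (simp add: drop_take take_take min_def)

lemma take_drop_app: "k + p \<le> length w \<Longrightarrow> take p (drop k (w @ v)) = take p (drop k w)"
  by simp

lemma H_rec:
  assumes ne: "P \<noteq> []" and L: "2 * length P \<le> L + 1"
  shows "q * card (H q P L) \<le> card (H q P (L+1)) + card (H q P (L+1-length P))"
proof -
  define p where "p = length P"
  have p0: "p > 0" using ne by (simp add: p_def)
  let ?f = "\<lambda>(w::nat list, c::nat). w @ [c]"
  let ?X = "H q P L \<times> {..<q}"
  have inj: "inj_on ?f ?X"
  proof (rule inj_onI)
    fix x y assume x: "x \<in> ?X" and y: "y \<in> ?X" and e: "?f x = ?f y"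
    obtain w c where xw: "x = (w, c)" by (cases x)
    obtain w' c' where yw: "y = (w', c')" by (cases y)
    from e show "x = y" by (simp add: xw yw)
  qed
  have sub: "?f ` ?X \<subseteq> H q P (L+1) \<union> (\<lambda>y. y @ P) ` H q P (L+1-p)"
  proof
    fix v assume "v \<in> ?f ` ?X"
    then obtain w c where wH: "w \<in> H q P L" and c: "c < q" and v: "v = w @ [c]" by auto
    have lw: "length w = L" and sw: "set w \<subseteq> {..<q}" and tw: "take p w = P"
      and nw: "\<And>k. k > 0 \<Longrightarrow> take p (drop k w) \<noteq> P"
      using wH by (auto simp: H_def q_words_def p_def)
    have vq: "v \<in> q_words q (L+1)" using lw sw c v by (auto simp: q_words_def)
    have tv: "take p v = P" using tw lw L v p_def by simp
    show "v \<in> H q P (L+1) \<union> (\<lambda>y. y @ P) ` H q P (L+1-p)"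
    proof (cases "\<exists>k>0. take p (drop k v) = P")
      case False
      hence "v \<in> H q P (L+1)" using vq tv unfolding H_def p_def by blast
      thus ?thesis by blast
    next
      case True
      then obtain k where k0: "k > 0" and kv: "take p (drop k v) = P" by blast
      have kle: "k + p \<le> L + 1" using occ_iff[OF ne, of k v] kv lw v by (simp add: p_def)
      have keq: "k = L + 1 - p"
      proof (rule ccontr)
        assume "k \<noteq> L + 1 - p"
        hence "k + p \<le> length w" using kle lw by simp
        hence "take p (drop k v) = take p (drop k w)" using v by simp
        thus False using kv nw[OF k0] by simp
      qed
      define y where "y = take (L+1-p) w"
      have lv: "length v = L + 1" using v lw by simp
      have dv: "drop (L+1-p) v = P"
      proof -
        have "length (drop (L+1-p) v) = p" using lv p0 L by (simp add: p_def)
        thus ?thesis using kv keq by simp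
      qed
      have yv: "take (L+1-p) v = y" using v lw p0 by (simp add: y_def)
      have vy: "v = y @ P" using yv dv by (metis append_take_drop_id)
      have yH: "y \<in> H q P (L+1-p)"
      proof -
        have "length y = L+1-p" using lw p0 by (simp add: y_def)
        moreover have "set y \<subseteq> {..<q}" using sw by (auto simp: y_def dest: in_set_takeD)
        moreover have "take p y = P" using tw L by (simp add: y_def p_def min_def, linarith)
        moreover have "\<forall>k>0. take p (drop k y) \<noteq> P"
        proof (intro allI impI)
          fix j :: nat assume j0: "j > 0"
          show "take p (drop j y) \<noteq> P"
          proof
            assume h: "take p (drop j y) = P"
            hence "j + p \<le> length y" using occ_iff[OF ne, of j y] by (simp add: p_def)
            hence "take p (drop j y) = take p (drop j w)"
              using `length y = L+1-p` by (simp add: y_def take_drop_take)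
            thus False using h nw[OF j0] by simp
          qed
        qed
        ultimately show ?thesis by (auto simp: H_def q_words_def p_def)
      qed
      show ?thesis using vy yH by auto
    qed
  qed
  have "q * card (H q P L) = card ?X" by (simp add: card_cartesian_product)
  also have "\<dots> = card (?f ` ?X)" using card_image[OF inj] by simp
  also have "\<dots> \<le> card (H q P (L+1) \<union> (\<lambda>y. y @ P) ` H q P (L+1-p))"
    by (rule card_mono[OF _ sub]) (simp add: H_finite)
  also have "\<dots> \<le> card (H q P (L+1)) + card ((\<lambda>y. y @ P) ` H q P (L+1-p))"
    by (rule card_Un_le)
  also have "\<dots> \<le> card (H q P (L+1)) + card (H q P (L+1-p))"
    using card_image_le[OF H_finite] by simp
  finally show ?thesis by (simp add: p_def)
qed


lemma geo_tail:
  assumes q: "q \<ge> (2::nat)"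
  shows "(\<Sum>k\<in>{s..<p}. q^(p-1-k)) \<le> q^(p-s) - 1"
proof (induction p)
  case 0 thus ?case by simp
next
  case (Suc p)
  show ?case
  proof (cases "s \<le> p")
    case False
    hence "{s..<Suc p} = {}" by auto
    thus ?thesis by simp
  next
    case True
    have "(\<Sum>k\<in>{s..<Suc p}. q^(Suc p-1-k)) = (\<Sum>k\<in>{s..<p}. q^(p-k)) + q^(p-p)"
      using True by (simp add: atLeastLessThanSuc)
    also have "(\<Sum>k\<in>{s..<p}. q^(p-k)) = q * (\<Sum>k\<in>{s..<p}. q^(p-1-k))"
      by (simp add: sum_distrib_left, rule sum.cong, simp,
          metis Suc_diff_Suc Suc_pred diff_diff_left le_add_diff_inverse2 power_Suc zero_less_diff atLeastLessThan_iff)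
    also have "q * (\<Sum>k\<in>{s..<p}. q^(p-1-k)) \<le> q * (q^(p-s) - 1)"
      using Suc.IH by simp
    finally have "(\<Sum>k\<in>{s..<Suc p}. q^(Suc p-1-k)) \<le> q * (q^(p-s) - 1) + 1" by simp
    also have "\<dots> \<le> q^(Suc p - s) - 1"
    proof -
      have "q^(Suc p - s) = q * q^(p-s)" using True by (simp add: Suc_diff_le)
      moreover have "q^(p-s) > 0" using q by simp
      then obtain t where "q^(p-s) = t + 1" using gr0_implies_Suc by fastforce
      ultimately show ?thesis using q by (simp add: algebra_simps)
    qed
    finally show ?thesis .
  qed
qed


lemma occ_prefix:
  assumes p: "length P = p" and p0: "0 < p" and k0: "0 < k" and lx: "length x = p - 1"
    and occ: "take p (drop k (P @ x)) = P"
  shows "k < p \<and> drop k P = take (p-k) P \<and> take k x = drop (p-k) P"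
proof -
  have ne: "P \<noteq> []" using p p0 by auto
  have "k + p \<le> length (P @ x)" using occ_iff[OF ne, of k "P@x"] occ p by simp
  hence kp: "k < p" using lx p ne by (cases p) auto
  have "take p (drop k (P @ x)) = drop k P @ take k x" using kp p by simp
  hence e: "drop k P @ take k x = take (p-k) P @ drop (p-k) P" using occ by simp
  have "length (drop k P) = length (take (p-k) P)" using p kp by simp
  hence "drop k P = take (p-k) P \<and> take k x = drop (p-k) P"
    using e append_eq_append_conv[of "drop k P" "take (p-k) P" "take k x" "drop (p-k) P"] by blast
  thus ?thesis using kp by simp
qed

lemma per_nth:
  assumes "drop r P = take (length P - r) P" "i + r < length P"
  shows "P!(i+r) = P!i"
proof -
  have "drop r P ! i = take (length P - r) P ! i" using assms(1) by simp
  thus ?thesis using assms(2) by (simp add: add.commute)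
qed

lemma occ_shift:
  assumes p: "length P = p" and lx: "length x = p - 1"
    and r0: "0 < r" and rk: "r < k" and kp: "k \<le> p - r"
    and perr: "drop r P = take (p-r) P"
    and occ: "take p (drop k (P @ x)) = P"
  shows "take p (drop r (P @ x)) = P"
proof -
  let ?W = "P @ x"
  have ne: "P \<noteq> []" using p r0 rk kp by auto
  have occn: "\<forall>i<p. ?W!(k+i) = P!i" using occ_iff[OF ne, of k ?W] occ p by simp
  have Wl: "\<And>j. j < p \<Longrightarrow> ?W!j = P!j" using p by (simp add: nth_append)
  have perk: "\<And>j. j + k < p \<Longrightarrow> P!(j+k) = P!j"
  proof -
    fix j assume "j + k < p"
    hence "?W!(k+j) = P!(k+j)" using Wl by simp
    thus "P!(j+k) = P!j" using occn `j + k < p` by (simp add: add.commute)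
  qed
  have perr': "\<And>j. j + r < p \<Longrightarrow> P!(j+r) = P!j" using per_nth[of r P] perr p by simp
  have "\<forall>i<p. ?W!(r+i) = P!i"
  proof (intro allI impI)
    fix i assume ip: "i < p"
    show "?W!(r+i) = P!i"
    proof (cases "r + i < p")
      case True thus ?thesis using Wl perr'[of i] by (simp add: add.commute)
    next
      case False
      hence ik: "i \<ge> k" using kp by simp
      have "?W!(r+i) = ?W!(k + (r+i-k))" using rk ik by simp
      also have "\<dots> = P!(r+i-k)" using occn rk ip by simp
      also have "\<dots> = P!(i-k)" using perr'[of "i-k"] ik ip rk by (simp add: add.commute)
      also have "\<dots> = P!i" using perk[of "i-k"] ik ip by simp
      finally show ?thesis .
    qed
  qed
  moreover have "r + p \<le> length ?W" using p lx rk kp by simp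
  ultimately show ?thesis using occ_iff[OF ne, of r ?W] p by simp
qed


lemma H_overlap:
  assumes q: "q \<ge> 2" and p3: "length P \<ge> 3" and sP: "set P \<subseteq> {..<q}"
  shows "q^(length P - 1) \<le> 2 * card (H q P (2 * length P - 1))"
proof -
  define p where "p = length P"
  have p3': "p \<ge> 3" using p3 p_def by simp
  have Pne: "P \<noteq> []" using p3 by auto
  define X where "X = {x \<in> q_words q (p-1). \<forall>k>0. take p (drop k (P @ x)) \<noteq> P}"
  define Bad where "Bad = {x \<in> q_words q (p-1). \<exists>k>0. take p (drop k (P @ x)) = P}"
  define B where "B k = {x \<in> q_words q (p-1). take k x = drop (p-k) P}" for k
  define r where "r = (LEAST k. 0 < k \<and> drop k P = take (p-k) P)"
  define s where "s = max (r+1) (p-r+1)"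
  have finX: "finite X" unfolding X_def by (rule finite_subset[OF _ qw_finite]) auto
  have finB: "\<And>k. finite (B k)" unfolding B_def by (rule finite_subset[OF _ qw_finite]) auto
  have XH: "card X \<le> card (H q P (2 * length P - 1))"
  proof -
    have inj: "inj_on (\<lambda>x. P @ x) X" by (rule inj_onI) simp
    have "(\<lambda>x. P @ x) ` X \<subseteq> H q P (2 * length P - 1)"
      using sP p3' Pne by (auto simp: X_def H_def q_words_def p_def)
    hence "card ((\<lambda>x. P @ x) ` X) \<le> card (H q P (2 * length P - 1))"
      by (rule card_mono[OF H_finite])
    thus ?thesis using card_image[OF inj] by simp
  qed
  have XB: "X \<union> Bad = q_words q (p-1)" "X \<inter> Bad = {}"
    unfolding X_def Bad_def by auto
  have finBad: "finite Bad" unfolding Bad_def by (rule finite_subset[OF _ qw_finite]) auto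
  have cXB: "card X + card Bad = q^(p-1)"
    using card_Un_disjoint[OF finX finBad XB(2)] XB(1) qw_card[of q "p-1"] by simp
  have rex: "0 < p \<and> drop p P = take (p-p) P" using p3' Pne by (simp add: p_def)
  have r0: "0 < r" and perr: "drop r P = take (p-r) P"
    using LeastI[of "\<lambda>k. 0 < k \<and> drop k P = take (p-k) P", OF rex] by (auto simp: r_def)
  have rle: "\<And>k. 0 < k \<Longrightarrow> drop k P = take (p-k) P \<Longrightarrow> r \<le> k"
    unfolding r_def by (rule Least_le) simp
  have cB: "\<And>k. k \<le> p \<Longrightarrow> card (B k) \<le> q^(p-1-k)"
  proof -
    fix k assume kp: "k \<le> p"
    show "card (B k) \<le> q^(p-1-k)"
    proof (cases "k = p")
      case True
      have "B k = {}"
      proof -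
        { fix x assume "x \<in> B k"
          hence "length x = p - 1" "take k x = drop (p-k) P" by (auto simp: B_def q_words_def)
          hence "length (take k x) = length (drop (p-k) P)" by simp
          hence False using True p_def p3' `length x = p - 1` by simp }
        thus ?thesis by blast
      qed
      thus ?thesis by simp
    next
      case False
      hence "k \<le> p - 1" using kp by simp
      from card_fix1[OF this, of q "drop (p-k) P"] show ?thesis by (simp add: B_def)
    qed
  qed
  have BadSub: "Bad \<subseteq> B r \<union> (\<Union>k\<in>{s..<p}. B k)"
  proof
    fix x assume xB: "x \<in> Bad"
    then obtain k where k0: "0 < k" and occ: "take p (drop k (P @ x)) = P" and xq: "x \<in> q_words q (p-1)"
      by (auto simp: Bad_def)
    have lx: "length x = p - 1" using xq by (simp add: q_words_def)
    have op: "k < p \<and> drop k P = take (p-k) P \<and> take k x = drop (p-k) P"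
      by (rule occ_prefix[OF p_def[symmetric] _ k0 lx occ]) (use p3' in simp)
    have rk: "r \<le> k" using rle k0 op by blast
    show "x \<in> B r \<union> (\<Union>k\<in>{s..<p}. B k)"
    proof (cases "k = r")
      case True thus ?thesis using op xq by (auto simp: B_def)
    next
      case False
      hence rk': "r < k" using rk by simp
      show ?thesis
      proof (cases "k \<le> p - r")
        case True
        have occr: "take p (drop r (P @ x)) = P"
          by (rule occ_shift[OF p_def[symmetric] lx r0 rk' True _ occ]) (use perr in simp)
        have "r < p \<and> drop r P = take (p-r) P \<and> take r x = drop (p-r) P"
          by (rule occ_prefix[OF p_def[symmetric] _ r0 lx occr]) (use p3' in simp)
        hence "take r x = drop (p-r) P" by simp
        thus ?thesis using xq by (auto simp: B_def)
      next
        case False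
        hence "k \<in> {s..<p}" using rk' op by (auto simp: s_def)
        thus ?thesis using op xq by (auto simp: B_def)
      qed
    qed
  qed
  have "card Bad \<le> card (B r \<union> (\<Union>k\<in>{s..<p}. B k))"
    by (rule card_mono[OF _ BadSub]) (simp add: finB)
  also have "\<dots> \<le> card (B r) + card (\<Union>k\<in>{s..<p}. B k)" by (rule card_Un_le)
  also have "card (\<Union>k\<in>{s..<p}. B k) \<le> (\<Sum>k\<in>{s..<p}. card (B k))" by (rule card_UN_le) simp
  also have "(\<Sum>k\<in>{s..<p}. card (B k)) \<le> (\<Sum>k\<in>{s..<p}. q^(p-1-k))"
    by (rule sum_mono) (use cB in auto)
  also have "\<dots> \<le> q^(p-s) - 1" by (rule geo_tail[OF q])
  finally have cBad: "card Bad \<le> card (B r) + (q^(p-s) - 1)" by simp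
  have rp: "r \<le> p" using rle[of p] p3' Pne by (simp add: p_def)
  have "2 * card Bad \<le> q^(p-1)"
  proof (cases "r = 1")
    case True
    hence "s = p" using p3' by (simp add: s_def)
    hence "card Bad \<le> q^(p-2)" using cBad cB[OF rp] True by (simp add: numeral_2_eq_2)
    moreover have "2 * q^(p-2) \<le> q^(p-1)"
    proof -
      have "p - 1 = Suc (p-2)" using p3' by simp
      hence "q^(p-1) = q * q^(p-2)" by simp
      thus ?thesis using q by simp
    qed
    ultimately show ?thesis by simp
  next
    case False
    hence r2: "r \<ge> 2" using r0 by simp
    have s3: "s \<ge> 3" using r2 by (simp add: s_def)
    have a1: "card (B r) \<le> q^(p-3)"
    proof -
      have "q^(p-1-r) \<le> q^(p-3)" using q r2 by (intro power_increasing) auto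
      thus ?thesis using cB[OF rp] by simp
    qed
    have a2: "q^(p-s) \<le> q^(p-3)" using q s3 by (intro power_increasing) auto
    have "4 * q^(p-3) \<le> q^(p-1)"
    proof -
      have "p - 1 = 2 + (p-3)" using p3' by simp
      hence "q^(p-1) = q^2 * q^(p-3)" by (simp only: power_add)
      moreover have "(2::nat)^2 \<le> q^2" using q by (rule power_mono) simp
      hence "4 \<le> q^2" by simp
      ultimately show ?thesis by simp
    qed
    thus ?thesis using cBad a1 a2 by linarith
  qed
  thus ?thesis using cXB XH unfolding p_def by linarith
qed


definition HE :: "nat \<Rightarrow> nat list \<Rightarrow> nat \<Rightarrow> nat list set" where
  "HE q P L = rev ` H q (rev P) L"

lemma HE_card: "card (HE q P L) = card (H q (rev P) L)"
  unfolding HE_def by (rule card_image) (simp add: inj_on_def)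

lemma HE_finite: "finite (HE q P L)"
  unfolding HE_def by (simp add: H_finite)

lemma take_drop_rev:
  assumes "length w = L" "k + p \<le> L"
  shows "take p (drop k (rev w)) = rev (take p (drop (L-k-p) w))"
proof (rule nth_equalityI)
  show "length (take p (drop k (rev w))) = length (rev (take p (drop (L-k-p) w)))" using assms by simp
next
  fix i assume "i < length (take p (drop k (rev w)))"
  hence i: "i < p" using assms by simp
  have "take p (drop k (rev w)) ! i = rev w ! (k+i)" using i assms by simp
  also have "\<dots> = w ! (L - Suc (k+i))" using i assms by (simp add: rev_nth)
  also have "\<dots> = rev (take p (drop (L-k-p) w)) ! i" using i assms by (simp add: rev_nth)
  finally show "take p (drop k (rev w)) ! i = rev (take p (drop (L-k-p) w)) ! i" .
qed

lemma HE_props: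
  assumes B: "B \<in> HE q P m" and pm: "length P \<le> m"
  shows "B \<in> q_words q m" "drop (m - length P) B = P"
    "\<And>k. k + length P < m \<Longrightarrow> take (length P) (drop k B) \<noteq> P"
proof -
  obtain B' where B': "B' \<in> H q (rev P) m" and BB: "B = rev B'" using B by (auto simp: HE_def)
  have l: "length B' = m" "set B' \<subseteq> {..<q}" "take (length P) B' = rev P"
    and n: "\<And>k. k > 0 \<Longrightarrow> take (length P) (drop k B') \<noteq> rev P"
    using B' by (auto simp: H_def q_words_def)
  show "B \<in> q_words q m" using l BB by (auto simp: q_words_def)
  have "rev (take (length P) B') = drop (m - length P) (rev B')"
    using rev_take[of "length P" B'] l(1) by simp
  thus "drop (m - length P) B = P" using l(3) BB by simp
  fix k assume k: "k + length P < m"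
  have e: "take (length P) (drop k B) = rev (take (length P) (drop (m - k - length P) B'))"
    using take_drop_rev[OF l(1), of k "length P"] k BB by simp
  have "m - k - length P > 0" using k by simp
  hence "take (length P) (drop (m - k - length P) B') \<noteq> rev P" by (rule n)
  thus "take (length P) (drop k B) \<noteq> P" using e by (metis rev_rev_ident)
qed

lemma HE_card_ge:
  assumes q: "q \<ge> 2" and p3: "length P \<ge> 3" and sP: "set P \<subseteq> {..<q}"
  shows "q^(length P - 1) \<le> 2 * card (HE q P (2 * length P - 1))"
  using H_overlap[OF q, of "rev P"] p3 sP by (simp add: HE_card)


lemma glue:
  assumes ne: "P \<noteq> []" and p: "p = length P"
    and m1: "2 * p \<le> m1 + 1" and m2: "2 * p \<le> m2 + 1" and N: "N + p = m1 + m2"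
  shows "card (H q P m1) * card (HE q P m2) \<le> G q P N + (p - 1) * q^(N - 2*p)"
proof -
  let ?g = "\<lambda>(A::nat list, B::nat list). A @ B"
  let ?Y = "H q P m1 \<times> HE q P m2"
  define AB where "AB = ?g ` ?Y"
  define S where "S = {w \<in> AB. \<exists>j. m1 - p < j \<and> j < m1 \<and> take p (drop j w) = P}"
  define Gs where "Gs = {w \<in> q_words q (N + length P).
      \<forall>k \<le> N. (take (length P) (drop k w) = P \<longleftrightarrow> (k = 0 \<or> k = N))}"
  have p0: "p > 0" using ne p by simp
  have lenA: "\<And>A. A \<in> H q P m1 \<Longrightarrow> length A = m1" by (auto simp: H_def q_words_def)
  have HEp: "\<And>B. B \<in> HE q P m2 \<Longrightarrow> B \<in> q_words q m2 \<and> drop (m2 - p) B = P \<and>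
      (\<forall>k. k + p < m2 \<longrightarrow> take p (drop k B) \<noteq> P)"
    using HE_props[of _ q P m2] m2 p p0 by auto
  have inj: "inj_on ?g ?Y"
  proof (rule inj_onI)
    fix x y assume x: "x \<in> ?Y" and y: "y \<in> ?Y" and e: "?g x = ?g y"
    obtain A B where xx: "x = (A, B)" by (cases x)
    obtain A' B' where yy: "y = (A', B')" by (cases y)
    have "length A = length A'" using x y xx yy lenA by auto
    thus "x = y" using e xx yy by simp
  qed
  have cAB: "card AB = card (H q P m1) * card (HE q P m2)"
    unfolding AB_def using card_image[OF inj] by (simp add: card_cartesian_product)
  have finAB: "finite AB" unfolding AB_def by (simp add: H_finite HE_finite)
  have finGs: "finite Gs" unfolding Gs_def by (rule finite_subset[OF _ qw_finite]) auto
  have G_eq: "G q P N = card Gs" by (simp add: G_def Gs_def)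
  have sub1: "AB - S \<subseteq> Gs"
  proof
    fix w assume w: "w \<in> AB - S"
    then obtain A B where A: "A \<in> H q P m1" and B: "B \<in> HE q P m2" and wAB: "w = A @ B"
      by (auto simp: AB_def)
    have nS: "\<And>j. m1 - p < j \<Longrightarrow> j < m1 \<Longrightarrow> take p (drop j w) \<noteq> P" using w by (auto simp: S_def)
    have lA: "length A = m1" "set A \<subseteq> {..<q}" "take p A = P"
      and nA: "\<And>k. k > 0 \<Longrightarrow> take p (drop k A) \<noteq> P"
      using A p by (auto simp: H_def q_words_def)
    have lB: "length B = m2" "set B \<subseteq> {..<q}" "drop (m2 - p) B = P"
      and nB: "\<And>k. k + p < m2 \<Longrightarrow> take p (drop k B) \<noteq> P"
      using HEp[OF B] by (auto simp: q_words_def)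
    have wq: "w \<in> q_words q (N + length P)" using lA lB wAB N p by (auto simp: q_words_def)
    have "\<forall>k \<le> N. (take p (drop k w) = P \<longleftrightarrow> (k = 0 \<or> k = N))"
    proof (intro allI impI)
      fix k assume kN: "k \<le> N"
      have occ0: "take p (drop 0 w) = P" using lA wAB m1 by simp
      have occN: "take p (drop N w) = P"
      proof -
        have "N - m1 = m2 - p" "m1 \<le> N" using N m2 p0 by linarith+
        hence "drop N w = drop (m2 - p) B" using wAB lA by simp
        thus ?thesis using lB p by simp
      qed
      show "take p (drop k w) = P \<longleftrightarrow> (k = 0 \<or> k = N)"
      proof
        assume occ: "take p (drop k w) = P"
        show "k = 0 \<or> k = N"
        proof (rule ccontr)
          assume "\<not> (k = 0 \<or> k = N)"
          hence k0: "k > 0" and kN': "k < N" using kN by auto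
          consider (a) "k + p \<le> m1" | (b) "m1 \<le> k" | (c) "m1 - p < k \<and> k < m1" 
          proof -
            have "k + p \<le> m1 \<or> m1 \<le> k \<or> (m1 - p < k \<and> k < m1)" using k0 by arith
            thus ?thesis using that by blast
          qed
          thus False
          proof cases
            case a
            hence "take p (drop k w) = take p (drop k A)" using wAB lA by simp
            thus False using occ nA[OF k0] by simp
          next
            case b
            hence "take p (drop k w) = take p (drop (k - m1) B)" using wAB lA by simp
            moreover have "(k - m1) + p < m2" using b kN' N by linarith
            ultimately show False using occ nB[of "k - m1"] by simp
          next
            case c thus False using nS occ by blast
          qed
        qed
      next
        assume "k = 0 \<or> k = N"
        thus "take p (drop k w) = P" using occ0 occN by auto
      qed
    qed
    thus "w \<in> Gs" using wq p by (simp add: Gs_def)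
  qed
  define X where "X i = {A \<in> q_words q m1. take p A = P \<and> drop (m1 - i) A = take i P}" for i
  define Z where "Z i = {B \<in> q_words q m2. take (p-i) B = drop i P \<and> drop (m2 - p) B = P}" for i
  have sub2: "S \<subseteq> (\<Union>i\<in>{1..<p}. ?g ` (X i \<times> Z i))"
  proof
    fix w assume w: "w \<in> S"
    then obtain A B j where A: "A \<in> H q P m1" and B: "B \<in> HE q P m2" and wAB: "w = A @ B"
      and j: "m1 - p < j" "j < m1" and occ: "take p (drop j w) = P"
      by (auto simp: S_def AB_def)
    define i where "i = m1 - j"
    have lA: "length A = m1" "take p A = P" "A \<in> q_words q m1" using A p by (auto simp: H_def q_words_def)
    have Bp: "B \<in> q_words q m2" "drop (m2 - p) B = P" using HEp[OF B] by auto
    have i: "1 \<le> i" "i < p" using j m1 by (auto simp: i_def)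
    have "take p (drop j w) = drop j A @ take (p - i) B" using wAB lA j by (simp add: i_def)
    hence e0: "drop j A @ take (p - i) B = P" using occ by simp
    have e: "drop j A @ take (p - i) B = take i P @ drop i P" unfolding append_take_drop_id by (rule e0)
    have "length (drop j A) = length (take i P)" using lA i p j by (simp add: i_def)
    hence ee: "drop j A = take i P" "take (p - i) B = drop i P"
      using e append_eq_append_conv[of "drop j A" "take i P" "take (p-i) B" "drop i P"] by blast+
    have "j = m1 - i" using j by (simp add: i_def)
    hence "A \<in> X i" using lA ee by (simp add: X_def)
    moreover have "B \<in> Z i" using Bp ee by (simp add: Z_def)
    ultimately show "w \<in> (\<Union>i\<in>{1..<p}. ?g ` (X i \<times> Z i))" using i wAB by force
  qed
  have cXZ: "\<And>i. i \<in> {1..<p} \<Longrightarrow> card (X i) * card (Z i) \<le> q^(N - 2*p)"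
  proof -
    fix i assume i: "i \<in> {1..<p}"
    have "card (X i) \<le> q^(m1 - p - i)" unfolding X_def by (rule card_fix2) (use i m1 in auto)
    moreover have "card (Z i) \<le> q^(m2 - (p-i) - p)" unfolding Z_def by (rule card_fix2) (use i m2 in auto)
    ultimately have "card (X i) * card (Z i) \<le> q^(m1 - p - i) * q^(m2 - (p-i) - p)"
      by (rule mult_le_mono)
    also have "\<dots> = q^(m1 - p - i + (m2 - (p-i) - p))" by (simp add: power_add)
    also have "m1 - p - i + (m2 - (p-i) - p) = N - 2*p" using i m1 m2 N by auto
    finally show "card (X i) * card (Z i) \<le> q^(N - 2*p)" .
  qed
  have finX: "\<And>i. finite (X i)" unfolding X_def by (rule finite_subset[OF _ qw_finite]) auto
  have finZ: "\<And>i. finite (Z i)" unfolding Z_def by (rule finite_subset[OF _ qw_finite]) auto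
  have "card S \<le> card (\<Union>i\<in>{1..<p}. ?g ` (X i \<times> Z i))"
    by (rule card_mono[OF _ sub2]) (simp add: finX finZ)
  also have "\<dots> \<le> (\<Sum>i\<in>{1..<p}. card (?g ` (X i \<times> Z i)))" by (rule card_UN_le) simp
  also have "\<dots> \<le> (\<Sum>i\<in>{1..<p}. card (X i) * card (Z i))"
  proof (rule sum_mono)
    fix i show "card (?g ` (X i \<times> Z i)) \<le> card (X i) * card (Z i)"
      using card_image_le[of "X i \<times> Z i" ?g] finX finZ by (simp add: card_cartesian_product)
  qed
  also have "\<dots> \<le> (\<Sum>i\<in>{1..<p}. q^(N - 2*p))" by (rule sum_mono) (rule cXZ)
  also have "\<dots> = (p - 1) * q^(N - 2*p)" by simp
  finally have cS: "card S \<le> (p - 1) * q^(N - 2*p)" .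
  have finS: "finite S" using finAB by (simp add: S_def)
  have "card AB - card S \<le> card (AB - S)" by (rule diff_card_le_card_Diff[OF finS])
  hence "card AB \<le> card (AB - S) + card S" by linarith
  also have "card (AB - S) \<le> card Gs" by (rule card_mono[OF finGs sub1])
  finally show ?thesis using cAB cS G_eq by linarith
qed



lemma decr:
  fixes a :: "nat \<Rightarrow> real"
  assumes a01: "\<And>L. 0 \<le> a L \<and> a L \<le> 1"
    and rec: "\<And>L. L \<ge> L0 \<Longrightarrow> a L - e * a (L+1-p) \<le> a (L+1)"
    and e: "0 \<le> e" and j: "j \<ge> L0"
  shows "a j - a (j + t) \<le> real t * e"
proof (induction t)
  case 0 thus ?case by simp
next
  case (Suc t)
  have "a (j+t) - e * a (j+t+1-p) \<le> a (j+t+1)" using rec[of "j+t"] j by simp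
  moreover have "e * a (j+t+1-p) \<le> e" using a01[of "j+t+1-p"] e by (simp add: mult_left_le)
  moreover have "real (Suc t) * e = real t * e + e" by (simp add: algebra_simps)
  ultimately show ?case using Suc.IH by simp
qed

lemma seq_bound:
  fixes a :: "nat \<Rightarrow> real"
  assumes a01: "\<And>L. 0 \<le> a L \<and> a L \<le> 1"
    and rec: "\<And>L. L \<ge> L0 \<Longrightarrow> a L - e * a (L+1-p) \<le> a (L+1)"
    and e: "0 \<le> e" "e \<le> 1" and a0: "c0 \<le> a L0" "0 \<le> c0" and p1: "p \<ge> 1"
  shows "(1-e)^n * c0 - real (min n p) * e - real n * real p * e^2 \<le> a (L0 + n)"
proof (induction n)
  case 0 thus ?case using a0 by simp
next
  case (Suc n)
  define L where "L = L0 + n"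
  define D where "D = real (min n p) * e + real n * real p * e^2"
  have D0: "D \<ge> 0" using e by (simp add: D_def)
  have IH: "(1-e)^n * c0 - D \<le> a L" using Suc.IH by (simp add: L_def D_def)
  have aL: "0 \<le> a L" using a01 by simp
  have key: "(1-e)^(Suc n) * c0 - D \<le> (1-e) * a L"
  proof -
    have "(1-e) * ((1-e)^n * c0 - D) \<le> (1-e) * a L" using IH e by (intro mult_left_mono) auto
    moreover have "(1-e)^(Suc n) * c0 - D \<le> (1-e) * ((1-e)^n * c0 - D)"
      using D0 e by (simp add: algebra_simps mult_left_le)
    ultimately show ?thesis by linarith
  qed
  show ?case
  proof (cases "n < p")
    case True
    have "e * a (L+1-p) \<le> e" using a01[of "L+1-p"] e by (simp add: mult_left_le)
    hence "a L - e \<le> a (L+1)"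
      using rec[of L] by (simp add: L_def)
    moreover have "(1-e) * a L \<le> a L" using aL e by (simp add: algebra_simps)
    moreover have "real (min (Suc n) p) * e = real (min n p) * e + e" using True by (simp add: algebra_simps)
    moreover have "real (Suc n) * real p * e^2 = real n * real p * e^2 + real p * e^2" by (simp add: algebra_simps)
    moreover have "0 \<le> real p * e^2" by simp
    moreover have "a (L0 + Suc n) = a (L + 1)" by (simp add: L_def)
    ultimately show ?thesis using key unfolding D_def by linarith
  next
    case False
    have jj: "L0 \<le> L+1-p" using False unfolding L_def by linarith
    have dj: "a (L+1-p) - a (L+1-p + (p-1)) \<le> real (p-1) * e"
      by (rule decr[OF a01 rec e(1) jj])
    have "L+1-p + (p-1) = L" using False p1 unfolding L_def by linarith
    hence dj': "a (L+1-p) \<le> a L + real (p-1) * e" using dj by simp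
    have "a L - e * a (L+1-p) \<le> a (L+1)" using rec[of L] by (simp add: L_def)
    moreover have "e * a (L+1-p) \<le> e * a L + real (p-1) * e^2"
      using mult_left_mono[OF dj' e(1)] by (simp add: algebra_simps power2_eq_square)
    moreover have "real (p-1) * e^2 \<le> real p * e^2" using e by (simp add: mult_right_mono)
    moreover have "real (min (Suc n) p) * e = real (min n p) * e" using False by simp
    moreover have "real (Suc n) * real p * e^2 = real n * real p * e^2 + real p * e^2" by (simp add: algebra_simps)
    moreover have "a (L0 + Suc n) = a (L + 1)" by (simp add: L_def)
    moreover have "(1-e) * a L = a L - e * a L" by (simp add: algebra_simps)
    ultimately show ?thesis using key unfolding D_def by linarith
  qed
qed

lemma exp_le_pow:
  fixes e :: real
  assumes "0 \<le> e" "e \<le> 1/2"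
  shows "exp (- 2 * real n * e) \<le> (1-e)^n"
proof -
  have "- e - 2 * e^2 \<le> ln (1 - e)" by (rule ln_one_minus_pos_lower_bound[OF assms])
  moreover have "- 2 * e \<le> - e - 2 * e^2"
  proof -
    have "e * (2*e) \<le> e * 1" using assms by (intro mult_left_mono) auto
    thus ?thesis by (simp add: power2_eq_square algebra_simps)
  qed
  ultimately have "exp (-2*e) \<le> exp (ln (1-e))" by simp
  hence "exp (-2*e) \<le> 1 - e" using assms by simp
  hence "exp (-2*e)^n \<le> (1-e)^n" by (rule power_mono) simp
  moreover have "exp (- 2 * real n * e) = exp (-2*e)^n"
    using exp_of_nat_mult[of n "-2*e"] by (simp add: algebra_simps)
  ultimately show ?thesis by simp
qed

lemma sq_le_pow2: "n \<ge> 4 \<Longrightarrow> n^2 \<le> (2::nat)^n"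
proof (induction n rule: dec_induct)
  case base thus ?case by simp
next
  case (step n)
  have "(Suc n)^2 = n^2 + 2*n + 1" by (simp add: power2_eq_square)
  also have "\<dots> \<le> 2 * n^2"
  proof -
    have "4 * n \<le> n * n" using step(1) by (rule mult_le_mono1)
    moreover have "n \<ge> 4" using step(1) by simp
    ultimately have "2*n+1 \<le> n*n" by linarith
    thus ?thesis by (simp add: power2_eq_square)
  qed
  also have "\<dots> \<le> 2 * 2^n" using step(3) by simp
  finally show ?case by simp
qed



theorem lemma5:
  fixes q :: nat
  assumes "q \<ge> 2"
  shows "\<exists>(N0::nat) (d::real). d > 0 \<and>
    (\<forall>(N::nat) (p::nat) (P::nat list).
       N > N0 \<longrightarrow>
       ln (real q) / (real q - 1) * real q ^ p \<le> real N \<longrightarrow>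
       real N < ln (real q) / (real q - 1) * real q ^ (p + 1) \<longrightarrow>
       P \<in> q_words q p \<longrightarrow>
       real (G q P N) \<ge> d * real q ^ (N + p) / real (N + p) ^ 2)"
proof -
  have q2: "real q \<ge> 2" using assms by simp
  define E where "E = exp (- 2 * real q)"
  have E0: "0 < E" "E \<le> 1" by (auto simp: E_def)
  define \<eta> where "\<eta> = E / (64 * (real q + 1))"
  have \<eta>0: "\<eta> > 0" using E0 q2 by (simp add: \<eta>_def)
  have \<eta>E: "(real q + 1) * \<eta> = E / 64" using q2 by (simp add: \<eta>_def field_simps)
  have \<eta>3: "\<eta> \<le> 1 / (3 * real q)"
  proof -
    have "\<eta> \<le> 1 / (64 * (real q + 1))" using E0 q2 by (simp add: \<eta>_def divide_right_mono)
    also have "\<dots> \<le> 1 / (3 * real q)" using q2 by (intro divide_left_mono) auto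
    finally show ?thesis .
  qed
  define p0 where "p0 = nat \<lceil>1/\<eta>\<rceil> + 4"
  define N0 where "N0 = q^(p0+1)"
  define d where "d = E / (16 * real q ^ 2)"
  have d0: "d > 0" using E0 q2 by (simp add: d_def)
  define c where "c = ln (real q) / (real q - 1)"
  have qpos: "real q - 1 > 0" using q2 by simp
  have lnle: "ln (real q) \<le> real q - 1" by (rule ln_le_minus_one) (use q2 in simp)
  have c1: "c \<le> 1" using lnle qpos by (simp add: c_def divide_le_eq)
  have lnge: "1 - 1 / real q \<le> ln (real q)"
  proof -
    have "ln (1 / real q) \<le> 1 / real q - 1" by (rule ln_le_minus_one) (use q2 in simp)
    moreover have "ln (1 / real q) = - ln (real q)" using q2 by (simp add: ln_div)
    ultimately show ?thesis by simp
  qed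
  have cge: "1 / real q \<le> c"
  proof -
    have "1 / real q * (real q - 1) = 1 - 1 / real q" using q2 by (simp add: field_simps)
    hence "1 / real q * (real q - 1) \<le> ln (real q)" using lnge by simp
    thus ?thesis using qpos by (simp add: c_def le_divide_eq)
  qed
  show ?thesis
  proof (intro exI conjI allI impI)
    show "d > 0" by (rule d0)
    fix N p :: nat and P :: "nat list"
    assume hN: "N > N0" and h1: "ln (real q) / (real q - 1) * real q ^ p \<le> real N"
      and h2: "real N < ln (real q) / (real q - 1) * real q ^ (p + 1)"
      and hP: "P \<in> q_words q p"
    have h1': "c * real q ^ p \<le> real N" using h1 by (simp add: c_def)
    have h2': "real N < c * real q ^ (p + 1)" using h2 by (simp add: c_def)
    have Qp0: "real q ^ p > 0" using q2 by simp
    have NQ: "real N < real q * real q ^ p"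
    proof -
      have "c * real q ^ (p+1) \<le> 1 * real q ^ (p+1)" using c1 q2 by (intro mult_right_mono) auto
      thus ?thesis using h2' by simp
    qed
    have Nlt: "N < q^(p+1)"
    proof -
      have "real N < real (q^(p+1))" using NQ by simp
      thus ?thesis by (simp only: of_nat_less_iff)
    qed
    have "q^(p0+1) < N" using hN by (simp add: N0_def)
    hence qq: "q^(p0+1) < q^(p+1)" using Nlt by (rule less_trans)
    have q1: "1 < q" using assms by simp
    have pp0: "p0 + 1 < p + 1" by (rule power_less_imp_less_exp[OF q1 qq])
    hence p5: "p \<ge> 5" unfolding p0_def by simp
    have peta: "1 / \<eta> \<le> real p"
    proof -
      have "nat \<lceil>1/\<eta>\<rceil> \<le> p" using pp0 unfolding p0_def by linarith
      hence "real (nat \<lceil>1/\<eta>\<rceil>) \<le> real p" by (simp only: of_nat_le_iff)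
      moreover have "1/\<eta> \<le> real (nat \<lceil>1/\<eta>\<rceil>)" by (rule real_nat_ceiling_ge)
      ultimately show ?thesis by linarith
    qed
    have ppow: "real p * real p \<le> real q ^ p"
    proof -
      have "p^2 \<le> 2^p" using p5 by (intro sq_le_pow2) simp
      also have "(2::nat)^p \<le> q^p" using assms by (rule power_mono) simp
      finally have "real (p^2) \<le> real (q^p)" by (simp only: of_nat_le_iff)
      thus ?thesis by (simp add: power2_eq_square)
    qed
    define \<epsilon> where "\<epsilon> = 1 / real q ^ p"
    have \<epsilon>0: "\<epsilon> > 0" using Qp0 by (simp add: \<epsilon>_def)
    have pe: "real p * \<epsilon> \<le> \<eta>"
    proof -
      have "real p * \<epsilon> = real p / real q ^ p" by (simp add: \<epsilon>_def)
      also have "\<dots> \<le> real p / (real p * real p)" using ppow p5 Qp0 by (intro divide_left_mono) auto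
      also have "\<dots> = 1 / real p" using p5 by simp
      also have "\<dots> \<le> \<eta>" using peta \<eta>0 p5 by (simp add: divide_le_eq mult.commute pos_divide_le_eq)
      finally show ?thesis .
    qed
    have \<epsilon>half: "\<epsilon> \<le> 1/2"
    proof -
      have "1 / (3 * real q) \<le> 1/2" using q2 by (intro divide_left_mono) auto
      hence "real p * \<epsilon> \<le> 1/2" using pe \<eta>3 by linarith
      moreover have "\<epsilon> \<le> real p * \<epsilon>" using p5 \<epsilon>0 by simp
      ultimately show ?thesis by linarith
    qed
    have lP: "length P = p" and sP: "set P \<subseteq> {..<q}" using hP by (auto simp: q_words_def)
    have Pne: "P \<noteq> []" using lP p5 by auto
    have Nge: "real q ^ p / real q \<le> real N"
    proof -
      have "real q ^ p / real q = 1 / real q * real q ^ p" by simp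
      also have "\<dots> \<le> c * real q ^ p" using cge Qp0 by (intro mult_right_mono) auto
      finally show ?thesis using h1' by linarith
    qed
    have N3: "3 * p \<le> N"
    proof -
      have "real p \<le> \<eta> * real q ^ p" using pe Qp0 by (simp add: \<epsilon>_def field_simps)
      also have "\<dots> \<le> 1 / (3 * real q) * real q ^ p" using \<eta>3 Qp0 by (intro mult_right_mono) auto
      finally have "3 * real p \<le> real q ^ p / real q" using q2 by (simp add: field_simps)
      hence "real (3 * p) \<le> real N" using Nge by simp
      thus ?thesis by (simp only: of_nat_le_iff)
    qed
    define a where "a L = real (card (H q P L)) / real q ^ (L - p)" for L
    have a01: "\<And>L. 0 \<le> a L \<and> a L \<le> 1"
    proof -
      fix L
      show "0 \<le> a L \<and> a L \<le> 1"
      proof (cases "L < p")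
        case True
        hence "H q P L = {}" using H_empty[of L P q] lP by simp
        thus ?thesis by (simp add: a_def)
      next
        case False
        hence "card (H q P L) \<le> q^(L-p)" using H_card_le[of P L q] lP by simp
        hence "real (card (H q P L)) \<le> real (q^(L-p))" by (simp only: of_nat_le_iff)
        hence "real (card (H q P L)) \<le> real q^(L-p)" by simp
        moreover have "real q ^ (L - p) > 0" using q2 by simp
        ultimately show ?thesis by (simp add: a_def divide_le_eq_1)
      qed
    qed
    have rec: "\<And>L. L \<ge> 2*p - 1 \<Longrightarrow> a L - \<epsilon> * a (L+1-p) \<le> a (L+1)"
    proof -
      fix L assume L: "L \<ge> 2*p - 1"
      have "q * card (H q P L) \<le> card (H q P (L+1)) + card (H q P (L+1-length P))"
        by (rule H_rec[OF Pne]) (use L lP p5 in simp)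
      hence "real (q * card (H q P L)) \<le> real (card (H q P (L+1)) + card (H q P (L+1-p)))"
        using lP by (simp only: of_nat_le_iff)
      hence hr: "real q * real (card (H q P L)) \<le> real (card (H q P (L+1))) + real (card (H q P (L+1-p)))"
        by simp
      define T where "T = real q ^ (L+1-p)"
      have T0: "T > 0" using q2 by (simp add: T_def)
      have T1: "T = real q * real q ^ (L-p)"
      proof -
        have "L+1-p = Suc (L-p)" using L p5 by simp
        hence "T = real q ^ Suc (L-p)" unfolding T_def by (rule arg_cong)
        thus ?thesis by simp
      qed
      have T2: "T = real q ^ p * real q ^ (L+1-p-p)"
      proof -
        have "L+1-p = p + (L+1-p-p)" using L p5 by simp
        hence "T = real q ^ (p + (L+1-p-p))" unfolding T_def by (rule arg_cong)
        thus ?thesis by (simp add: power_add)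
      qed
      have e1: "a L = real q * real (card (H q P L)) / T" using T1 q2 by (simp add: a_def)
      have e2: "\<epsilon> * a (L+1-p) = real (card (H q P (L+1-p))) / T" using T2 by (simp add: a_def \<epsilon>_def)
      have e3: "a (L+1) = real (card (H q P (L+1))) / T" by (simp add: a_def T_def)
      have "real q * real (card (H q P L)) / T - real (card (H q P (L+1-p))) / T
            \<le> real (card (H q P (L+1))) / T"
      proof -
        have "(real q * real (card (H q P L)) - real (card (H q P (L+1-p)))) / T
            \<le> real (card (H q P (L+1))) / T" using hr T0 by (intro divide_right_mono) auto
        thus ?thesis by (simp add: diff_divide_distrib)
      qed
      thus "a L - \<epsilon> * a (L+1-p) \<le> a (L+1)" using e1 e2 e3 by simp
    qed
    have a0: "1/2 \<le> a (2*p-1)"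
    proof -
      have "q^(p-1) \<le> 2 * card (H q P (2*p-1))" using H_overlap[OF assms, of P] lP sP p5 by simp
      hence "real (q^(p-1)) \<le> real (2 * card (H q P (2*p-1)))" by (simp only: of_nat_le_iff)
      hence "real q^(p-1) \<le> 2 * real (card (H q P (2*p-1)))" by simp
      moreover have "2*p-1-p = p-1" by simp
      moreover have "real q^(p-1) > 0" using q2 by simp
      ultimately show ?thesis by (simp add: a_def field_simps)
    qed
    define n where "n = N + 2 - 3*p"
    have sb: "(1-\<epsilon>)^n * (1/2) - real (min n p) * \<epsilon> - real n * real p * \<epsilon>^2 \<le> a (2*p-1 + n)"
      by (rule seq_bound[OF a01 rec]) (use \<epsilon>0 \<epsilon>half a0 p5 in auto)
    have p1: "p \<ge> 1" using p5 by simp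
    have nN: "real n \<le> real N" using N3 p5 by (simp add: n_def)
    have m1: "2*p - 1 + n = N + 1 - p" using N3 p5 by (simp add: n_def)
    have neq: "real n * \<epsilon> < real q"
    proof -
      have "real n * \<epsilon> \<le> real N * \<epsilon>" using nN \<epsilon>0 by (intro mult_right_mono) auto
      also have "\<dots> = real N / real q ^ p" by (simp add: \<epsilon>_def)
      also have "\<dots> < real q" using NQ Qp0 by (simp add: divide_less_eq mult.commute)
      finally show ?thesis .
    qed
    have Eexp: "E \<le> (1-\<epsilon>)^n"
    proof -
      have "E \<le> exp (- 2 * real n * \<epsilon>)" unfolding E_def using neq by simp
      also have "\<dots> \<le> (1-\<epsilon>)^n" by (rule exp_le_pow) (use \<epsilon>0 \<epsilon>half in auto)
      finally show ?thesis .
    qed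
    have t2: "real (min n p) * \<epsilon> \<le> \<eta>"
    proof -
      have "real (min n p) * \<epsilon> \<le> real p * \<epsilon>" using \<epsilon>0 by (intro mult_right_mono) auto
      thus ?thesis using pe by linarith
    qed
    have t3: "real n * real p * \<epsilon>^2 \<le> real q * \<eta>"
    proof -
      have "real n * real p * \<epsilon>^2 = (real n * \<epsilon>) * (real p * \<epsilon>)" by (simp add: power2_eq_square)
      also have "\<dots> \<le> real q * \<eta>" using neq pe \<epsilon>0 by (intro mult_mono) auto
      finally show ?thesis .
    qed
    have aN: "E/4 \<le> a (N + 1 - p)"
    proof -
      have "E * (1/2) \<le> (1-\<epsilon>)^n * (1/2)" using Eexp by simp
      hence "E/2 - \<eta> - real q * \<eta> \<le> a (2*p-1+n)" using sb t2 t3 by linarith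
      moreover have "\<eta> + real q * \<eta> = E/64" using \<eta>E by (simp add: algebra_simps)
      ultimately have "E/2 - E/64 \<le> a (N+1-p)" using m1 by simp
      thus ?thesis using E0 by simp
    qed
    define R where "R = real q ^ (N - p)"
    have R0: "R > 0" using q2 by (simp add: R_def)
    have aH: "E/4 * real q^(N+1-p-p) \<le> real (card (H q P (N+1-p)))"
    proof -
      have "real q^(N+1-p-p) > 0" using q2 by simp
      thus ?thesis using aN by (simp add: a_def le_divide_eq)
    qed
    have HEb: "real q^(p-1) \<le> 2 * real (card (HE q P (2*p-1)))"
    proof -
      have "q^(p-1) \<le> 2 * card (HE q P (2*p-1))" using HE_card_ge[OF assms, of P] lP sP p5 by simp
      hence "real (q^(p-1)) \<le> real (2 * card (HE q P (2*p-1)))" by (simp only: of_nat_le_iff)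
      thus ?thesis by simp
    qed
    have gl: "card (H q P (N+1-p)) * card (HE q P (2*p-1)) \<le> G q P N + (p-1) * q^(N-2*p)"
      by (rule glue[OF Pne lP[symmetric]]) (use N3 p5 in auto)
    hence glr: "real (card (H q P (N+1-p))) * real (card (HE q P (2*p-1))) \<le> real (G q P N) + real (p-1) * real q^(N-2*p)"
    proof -
      assume "card (H q P (N+1-p)) * card (HE q P (2*p-1)) \<le> G q P N + (p-1) * q^(N-2*p)"
      hence "real (card (H q P (N+1-p)) * card (HE q P (2*p-1))) \<le> real (G q P N + (p-1) * q^(N-2*p))"
        by (simp only: of_nat_le_iff)
      thus ?thesis by simp
    qed
    have pw1: "real q^(N+1-p-p) * real q^(p-1) = R"
    proof -
      have "N+1-p-p + (p-1) = N - p" using N3 p5 by simp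
      hence "real q^(N+1-p-p + (p-1)) = R" unfolding R_def by (rule arg_cong)
      thus ?thesis by (simp add: power_add)
    qed
    have pw2: "R = real q^p * real q^(N-2*p)"
    proof -
      have "N - p = p + (N - 2*p)" using N3 p5 by simp
      hence "R = real q^(p + (N - 2*p))" unfolding R_def by (rule arg_cong)
      thus ?thesis by (simp add: power_add)
    qed
    have prod: "E/8 * R \<le> real (card (H q P (N+1-p))) * real (card (HE q P (2*p-1)))"
    proof -
      have "(E/4 * real q^(N+1-p-p)) * (real q^(p-1) / 2)
          \<le> real (card (H q P (N+1-p))) * real (card (HE q P (2*p-1)))"
        using aH HEb E0 q2 by (intro mult_mono) auto
      moreover have "(E/4 * real q^(N+1-p-p)) * (real q^(p-1) / 2) = E/8 * R"
      proof -
        have "(E/4 * real q^(N+1-p-p)) * (real q^(p-1) / 2) = E/8 * (real q^(N+1-p-p) * real q^(p-1))"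
          by (simp add: field_simps)
        also have "\<dots> = E/8 * R" by (simp only: pw1)
        finally show ?thesis .
      qed
      ultimately show ?thesis by linarith
    qed
    have err: "real (p-1) * real q^(N-2*p) \<le> \<eta> * R"
    proof -
      have "real (p-1) * real q^(N-2*p) \<le> real p * real q^(N-2*p)" using q2 by (intro mult_right_mono) auto
      also have "\<dots> = (real p * \<epsilon>) * R"
      proof -
        have eR: "\<epsilon> * R = real q^(N-2*p)" unfolding pw2 \<epsilon>_def using Qp0 by simp
        show ?thesis by (simp only: mult.assoc eR)
      qed
      also have "\<dots> \<le> \<eta> * R" using pe R0 by (intro mult_right_mono) auto
      finally show ?thesis .
    qed
    have \<eta>64: "\<eta> \<le> E/64" using \<eta>E \<eta>0 by (smt (verit) mult_le_cancel_right1 of_nat_0_le_iff)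
    have Gb: "E/16 * R \<le> real (G q P N)"
    proof -
      have "E/8 * R - \<eta> * R \<le> real (G q P N)" using prod glr err by linarith
      moreover have "\<eta> * R \<le> E/64 * R" using \<eta>64 R0 by (intro mult_right_mono) auto
      moreover have "E/8 * R = 8 * (E/64 * R)" "E/16 * R = 4 * (E/64 * R)" by simp_all
      moreover have "0 \<le> E/64 * R" using E0 R0 by simp
      ultimately show ?thesis by linarith
    qed
    have QpN: "real q ^ p \<le> real q * real (N + p)"
    proof -
      have "real q ^ p \<le> real q * real N" using Nge q2 by (simp add: divide_le_eq mult.commute)
      also have "\<dots> \<le> real q * real (N + p)" using q2 by (intro mult_left_mono) auto
      finally show ?thesis .
    qed
    have Np0: "real (N + p) > 0" using p5 by simp
    have sq: "(real q ^ p)^2 \<le> real q^2 * real (N + p)^2"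
    proof -
      have "(real q ^ p)^2 \<le> (real q * real (N + p))^2" using QpN Qp0 by (intro power_mono) auto
      thus ?thesis by (simp add: power_mult_distrib)
    qed
    have pw3: "real q ^ (N + p) = R * (real q ^ p)^2"
    proof -
      have "N + p = (N - p) + p * 2" using N3 by simp
      hence "real q ^ (N + p) = real q ^ ((N - p) + p * 2)" by (rule arg_cong)
      also have "\<dots> = real q ^ (N - p) * real q ^ (p * 2)" by (rule power_add)
      also have "real q ^ (p * 2) = (real q ^ p)^2" by (rule power_mult)
      finally show ?thesis by (simp add: R_def)
    qed
    have "d * real q ^ (N + p) / real (N + p) ^ 2 = E / (16 * real q^2) * R * ((real q ^ p)^2 / real (N + p)^2)"
      by (simp add: d_def pw3)
    also have "\<dots> \<le> E / (16 * real q^2) * R * real q^2"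
    proof -
      have "(real q ^ p)^2 / real (N + p)^2 \<le> real q^2" using sq Np0 by (simp add: divide_le_eq)
      thus ?thesis using E0 R0 q2 by (intro mult_left_mono) auto
    qed
    also have "\<dots> = E/16 * R" using q2 by simp
    finally show "d * real q ^ (N + p) / real (N + p) ^ 2 \<le> real (G q P N)" using Gb by linarith
  qed
qed

end
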